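(* Let $\mathcal L$ be a complete residuated lattice satisfying, for all $x\in L$ and all families $\{y_i\}_{i\in I}\subseteq L$, $$x\vee\bigwedge_{i\in I}y_i=\bigwedge_{i\in I}(x\vee y_i),\qquad x\otimes\bigwedge_{i\in I}y_i=\bigwedge_{i\in I}(x\otimes y_i).$$ Let $\mathcal A=(A,\delta^A,\sigma^A,\tau^A)$ and $\mathcal B=(B,\delta^B,\sigma^B,\tau^B)$ be fuzzy automata over $\mathcal L$ and $X$, let $w\in\{fs,bs,fb,bb,fbb,bfb\}$, let $\varphi_1=\psi^w$, $\varphi_{k+1}=\varphi_k\wedge\phi^w(\varphi_k)$ for $k\in\mathbb N$, and let $\varphi=\bigwedge_{k\in\mathbb N}\varphi_k$. Then: (a) $\varphi$ is the greatest fuzzy relation in $\mathcal R(A,B)$ satisfying $(w\text{-}2)$ and $(w\text{-}3)$; (b) if $\varphi$ satisfies $(w\text{-}1)$, then it is the greatest fuzzy relation in $\mathcal R(A,B)$ satisfying $(w\text{-}1)$, $(w\text{-}2)$ and $(w\text{-}3)$; (c) if $\varphi$ does not satisfy $(w\text{-}1)$, then no fuzzy relation in $\mathcal R(A,B)$ satisfies $(w\text{-}1)$, $(w\text{-}2)$ and $(w\text{-}3)$.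
   Context: A complete residuated lattice $\mathcal L=(L,\wedge,\vee,\otimes,\to,0,1)$: $(L,\wedge,\vee,0,1)$ is a complete lattice with least element $0$ and greatest element $1$, $(L,\otimes,1)$ is a commutative monoid, and $x\otimes y\le z\iff x\le y\to z$. For nonempty sets $A,B$, $\mathcal R(A,B)$ denotes the set of fuzzy relations $A\times B\to L$, ordered pointwise, with pointwise (arbitrary) meets $\wedge$ and joins; $L^A$ denotes functions $A\to L$. Converse: $\varphi^{-1}(b,a)=\varphi(a,b)$. Compositions: $(\varphi\circ\psi)(a,c)=\bigvee_{b}\varphi(a,b)\otimes\psi(b,c)$; for $f\in L^A$, $g\in L^B$, $\varphi\in\mathcal R(A,B)$: $(f\circ\varphi)(b)=\bigvee_{a}f(a)\otimes\varphi(a,b)$, $(\varphi\circ g)(a)=\bigvee_{b}\varphi(a,b)\otimes g(b)$. For $\eta\in L^A,\xi\in L^B$: $(\eta\to\xi)(a,b)=\eta(a)\to\xi(b)$, $(\eta\leftarrow\xi)(a,b)=\xi(b)\to\eta(a)$, $\eta\leftrightarrow\xi=(\eta\to\xi)\wedge(\eta\leftarrow\xi)$. $X$ is a finite nonempty alphabet. A fuzzy automaton $\mathcal A=(A,\delta^A,\sigma^A,\tau^A)$: finite nonempty state set $A$, $\delta^A:A\times X\times A\to L$, $\sigma^A,\tau^A\in L^A$; $\delta^A_x(a,a')=\delta^A(a,x,a')$. Similarly for $\mathcal B$. Conditions on $\varphi\in\mathcal R(A,B)$ (those with $x$ required for all $x\in X$); $(w\text{-}i)$ denotes condition $(i)$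 of type $w$: - $fs$: (1) $\sigma^A\le\sigma^B\circ\varphi^{-1}$; (2) $\varphi^{-1}\circ\delta^A_x\le\delta^B_x\circ\varphi^{-1}$; (3) $\varphi^{-1}\circ\tau^A\le\tau^B$. - $bs$: (1) $\tau^A\le\varphi\circ\tau^B$; (2) $\delta^A_x\circ\varphi\le\varphi\circ\delta^B_x$; (3) $\sigma^A\circ\varphi\le\sigma^B$. - $fb$: (1) $\sigma^A\le\sigma^B\circ\varphi^{-1}$, $\sigma^B\le\sigma^A\circ\varphi$; (2) $\varphi^{-1}\circ\delta^A_x\le\delta^B_x\circ\varphi^{-1}$, $\varphi\circ\delta^B_x\le\delta^A_x\circ\varphi$; (3) $\varphi^{-1}\circ\tau^A\le\tau^B$, $\varphi\circ\tau^B\le\tau^A$. - $bb$: (1) $\tau^A\le\varphi\circ\tau^B$, $\tau^B\le\varphi^{-1}\circ\tau^A$; (2) $\delta^A_x\circ\varphi\le\varphi\circ\delta^B_x$, $\delta^B_x\circ\varphi^{-1}\le\varphi^{-1}\circ\delta^A_x$; (3) $\sigma^A\circ\varphi\le\sigma^B$, $\sigma^B\circ\varphi^{-1}\le\sigma^A$. - $fbb$: (1) $\sigma^A\le\sigma^B\circ\varphi^{-1}$, $\tau^B\le\varphi^{-1}\circ\tau^A$; (2) $\varphi^{-1}\circ\delta^A_x=\delta^B_x\circ\varphi^{-1}$; (3) $\sigma^B\circ\varphi^{-1}\le\sigma^A$, $\varphi^{-1}\circ\tau^A\le\tau^B$. - $bfb$: (1) $\sigma^B\le\sigma^A\circ\varphi$,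 $\tau^A\le\varphi\circ\tau^B$; (2) $\delta^A_x\circ\varphi=\varphi\circ\delta^B_x$; (3) $\sigma^A\circ\varphi\le\sigma^B$, $\varphi\circ\tau^B\le\tau^A$. $\psi^{fs}=\tau^A\to\tau^B$; $\psi^{bs}=\sigma^A\to\sigma^B$; $\psi^{fb}=\tau^A\leftrightarrow\tau^B$; $\psi^{bb}=\sigma^A\leftrightarrow\sigma^B$; $\psi^{fbb}=(\tau^A\to\tau^B)\wedge(\sigma^A\leftarrow\sigma^B)$; $\psi^{bfb}=(\sigma^A\to\sigma^B)\wedge(\tau^A\leftarrow\tau^B)$. For $\alpha\in\mathcal R(A,B)$: $F(\alpha)(a,b)=\bigwedge_{x\in X}\bigwedge_{a'\in A}\big[\delta^A_x(a,a')\to\bigvee_{b'\in B}\delta^B_x(b,b')\otimes\alpha(a',b')\big]$, $F'(\alpha)(a,b)=\bigwedge_{x\in X}\bigwedge_{b'\in B}\big[\delta^B_x(b,b')\to\bigvee_{a'\in A}\delta^A_x(a,a')\otimes\alpha(a',b')\big]$, $G(\alpha)(a,b)=\bigwedge_{x\in X}\bigwedge_{a'\in A}\big[\delta^A_x(a',a)\to\bigvee_{b'\in B}\alpha(a',b')\otimes\delta^B_x(b',b)\big]$, $G'(\alpha)(a,b)=\bigwedge_{x\in X}\bigwedge_{b'\in B}\big[\delta^B_x(b',b)\to\bigvee_{a'\in A}\delta^A_x(a',a)\otimes\alpha(a',b')\big]$; $\phi^{fs}=F$, $\phi^{bs}=G$, $\phi^{fb}=F\wedge F'$, $\phi^{bb}=G\wedge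 G'$, $\phi^{fbb}=F\wedge G'$, $\phi^{bfb}=G\wedge F'$. *)

theory Defs
  imports Main
begin

text \<open>The carrier is a type of class complete_lattice (0 = bot, 1 = top);
 the monoid operation m and residuum r are parameters.\<close>

definition complete_residuated_lattice ::
  "('l::complete_lattice \<Rightarrow> 'l \<Rightarrow> 'l) \<Rightarrow> ('l \<Rightarrow> 'l \<Rightarrow> 'l) \<Rightarrow> bool" where
  "complete_residuated_lattice m r \<longleftrightarrow>
     comm_monoid m top \<and> (\<forall>x y z. m x y \<le> z \<longleftrightarrow> x \<le> r y z)"

text \<open>Infinite distributivity conditions (over nonempty index families,
 represented by their sets of values).\<close>

definition inf_distributive :: "('l::complete_lattice \<Rightarrow> 'l \<Rightarrow> 'l) \<Rightarrow> bool" where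
  "inf_distributive m \<longleftrightarrow>
     (\<forall>(x::'l) (Y::'l set). Y \<noteq> {} \<longrightarrow>
        sup x (Inf Y) = (INF y\<in>Y. sup x y) \<and> m x (Inf Y) = (INF y\<in>Y. m x y))"

definition conv :: "('a \<Rightarrow> 'b \<Rightarrow> 'l) \<Rightarrow> 'b \<Rightarrow> 'a \<Rightarrow> 'l" where
  "conv \<phi> b a = \<phi> a b"

definition rcomp :: "('l::complete_lattice \<Rightarrow> 'l \<Rightarrow> 'l) \<Rightarrow>
    ('a \<Rightarrow> 'b \<Rightarrow> 'l) \<Rightarrow> ('b \<Rightarrow> 'c \<Rightarrow> 'l) \<Rightarrow> 'a \<Rightarrow> 'c \<Rightarrow> 'l" where
  "rcomp m \<phi> \<psi> a c = (SUP b. m (\<phi> a b) (\<psi> b c))"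

definition scomp :: "('l::complete_lattice \<Rightarrow> 'l \<Rightarrow> 'l) \<Rightarrow>
    ('a \<Rightarrow> 'l) \<Rightarrow> ('a \<Rightarrow> 'b \<Rightarrow> 'l) \<Rightarrow> 'b \<Rightarrow> 'l" where
  "scomp m f \<phi> b = (SUP a. m (f a) (\<phi> a b))"

definition compr :: "('l::complete_lattice \<Rightarrow> 'l \<Rightarrow> 'l) \<Rightarrow>
    ('a \<Rightarrow> 'b \<Rightarrow> 'l) \<Rightarrow> ('b \<Rightarrow> 'l) \<Rightarrow> 'a \<Rightarrow> 'l" where
  "compr m \<phi> g a = (SUP b. m (\<phi> a b) (g b))"

text \<open>States: a finite type 'a; alphabet: a finite type 'x.
 delta x a a' is the transition degree.\<close>
record ('x, 'a, 'l) fuzzy_automaton =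
  delta :: "'x \<Rightarrow> 'a \<Rightarrow> 'a \<Rightarrow> 'l"
  sigma :: "'a \<Rightarrow> 'l"
  tau   :: "'a \<Rightarrow> 'l"

datatype simtype = FS | BS | FB | BB | FBB | BFB

definition cond1 :: "('l::complete_lattice \<Rightarrow> 'l \<Rightarrow> 'l) \<Rightarrow> simtype \<Rightarrow>
    ('x, 'a, 'l) fuzzy_automaton \<Rightarrow> ('x, 'b, 'l) fuzzy_automaton \<Rightarrow> ('a \<Rightarrow> 'b \<Rightarrow> 'l) \<Rightarrow> bool" where
  "cond1 m w A B \<phi> = (case w of
     FS \<Rightarrow> sigma A \<le> scomp m (sigma B) (conv \<phi>)
   | BS \<Rightarrow> tau A \<le> compr m \<phi> (tau B)
   | FB \<Rightarrow> sigma A \<le> scomp m (sigma B) (conv \<phi>) \<and> sigma B \<le> scomp m (sigma A) \<phi>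
   | BB \<Rightarrow> tau A \<le> compr m \<phi> (tau B) \<and> tau B \<le> compr m (conv \<phi>) (tau A)
   | FBB \<Rightarrow> sigma A \<le> scomp m (sigma B) (conv \<phi>) \<and> tau B \<le> compr m (conv \<phi>) (tau A)
   | BFB \<Rightarrow> sigma B \<le> scomp m (sigma A) \<phi> \<and> tau A \<le> compr m \<phi> (tau B))"

definition cond2 :: "('l::complete_lattice \<Rightarrow> 'l \<Rightarrow> 'l) \<Rightarrow> simtype \<Rightarrow>
    ('x, 'a, 'l) fuzzy_automaton \<Rightarrow> ('x, 'b, 'l) fuzzy_automaton \<Rightarrow> ('a \<Rightarrow> 'b \<Rightarrow> 'l) \<Rightarrow> bool" where
  "cond2 m w A B \<phi> = (\<forall>x. case w of
     FS \<Rightarrow> rcomp m (conv \<phi>) (delta A x) \<le> rcomp m (delta B x) (conv \<phi>)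
   | BS \<Rightarrow> rcomp m (delta A x) \<phi> \<le> rcomp m \<phi> (delta B x)
   | FB \<Rightarrow> rcomp m (conv \<phi>) (delta A x) \<le> rcomp m (delta B x) (conv \<phi>)
           \<and> rcomp m \<phi> (delta B x) \<le> rcomp m (delta A x) \<phi>
   | BB \<Rightarrow> rcomp m (delta A x) \<phi> \<le> rcomp m \<phi> (delta B x)
           \<and> rcomp m (delta B x) (conv \<phi>) \<le> rcomp m (conv \<phi>) (delta A x)
   | FBB \<Rightarrow> rcomp m (conv \<phi>) (delta A x) = rcomp m (delta B x) (conv \<phi>)
   | BFB \<Rightarrow> rcomp m (delta A x) \<phi> = rcomp m \<phi> (delta B x))"

definition cond3 :: "('l::complete_lattice \<Rightarrow> 'l \<Rightarrow> 'l) \<Rightarrow> simtype \<Rightarrow>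
    ('x, 'a, 'l) fuzzy_automaton \<Rightarrow> ('x, 'b, 'l) fuzzy_automaton \<Rightarrow> ('a \<Rightarrow> 'b \<Rightarrow> 'l) \<Rightarrow> bool" where
  "cond3 m w A B \<phi> = (case w of
     FS \<Rightarrow> compr m (conv \<phi>) (tau A) \<le> tau B
   | BS \<Rightarrow> scomp m (sigma A) \<phi> \<le> sigma B
   | FB \<Rightarrow> compr m (conv \<phi>) (tau A) \<le> tau B \<and> compr m \<phi> (tau B) \<le> tau A
   | BB \<Rightarrow> scomp m (sigma A) \<phi> \<le> sigma B \<and> scomp m (sigma B) (conv \<phi>) \<le> sigma A
   | FBB \<Rightarrow> scomp m (sigma B) (conv \<phi>) \<le> sigma A \<and> compr m (conv \<phi>) (tau A) \<le> tau B
   | BFB \<Rightarrow> scomp m (sigma A) \<phi> \<le> sigma B \<and> compr m \<phi> (tau B) \<le> tau A)"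

definition psi :: "('l::complete_lattice \<Rightarrow> 'l \<Rightarrow> 'l) \<Rightarrow> simtype \<Rightarrow>
    ('x, 'a, 'l) fuzzy_automaton \<Rightarrow> ('x, 'b, 'l) fuzzy_automaton \<Rightarrow> 'a \<Rightarrow> 'b \<Rightarrow> 'l" where
  "psi r w A B a b = (case w of
     FS \<Rightarrow> r (tau A a) (tau B b)
   | BS \<Rightarrow> r (sigma A a) (sigma B b)
   | FB \<Rightarrow> inf (r (tau A a) (tau B b)) (r (tau B b) (tau A a))
   | BB \<Rightarrow> inf (r (sigma A a) (sigma B b)) (r (sigma B b) (sigma A a))
   | FBB \<Rightarrow> inf (r (tau A a) (tau B b)) (r (sigma B b) (sigma A a))
   | BFB \<Rightarrow> inf (r (sigma A a) (sigma B b)) (r (tau B b) (tau A a)))"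

definition opF :: "('l::complete_lattice \<Rightarrow> 'l \<Rightarrow> 'l) \<Rightarrow> ('l \<Rightarrow> 'l \<Rightarrow> 'l) \<Rightarrow>
    ('x, 'a, 'l) fuzzy_automaton \<Rightarrow> ('x, 'b, 'l) fuzzy_automaton \<Rightarrow> ('a \<Rightarrow> 'b \<Rightarrow> 'l) \<Rightarrow> 'a \<Rightarrow> 'b \<Rightarrow> 'l" where
  "opF m r A B \<alpha> a b = (INF x. INF a'. r (delta A x a a') (SUP b'. m (delta B x b b') (\<alpha> a' b')))"

definition opF' :: "('l::complete_lattice \<Rightarrow> 'l \<Rightarrow> 'l) \<Rightarrow> ('l \<Rightarrow> 'l \<Rightarrow> 'l) \<Rightarrow>
    ('x, 'a, 'l) fuzzy_automaton \<Rightarrow> ('x, 'b, 'l) fuzzy_automaton \<Rightarrow> ('a \<Rightarrow> 'b \<Rightarrow> 'l) \<Rightarrow> 'a \<Rightarrow> 'b \<Rightarrow> 'l" where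
  "opF' m r A B \<alpha> a b = (INF x. INF b'. r (delta B x b b') (SUP a'. m (delta A x a a') (\<alpha> a' b')))"

definition opG :: "('l::complete_lattice \<Rightarrow> 'l \<Rightarrow> 'l) \<Rightarrow> ('l \<Rightarrow> 'l \<Rightarrow> 'l) \<Rightarrow>
    ('x, 'a, 'l) fuzzy_automaton \<Rightarrow> ('x, 'b, 'l) fuzzy_automaton \<Rightarrow> ('a \<Rightarrow> 'b \<Rightarrow> 'l) \<Rightarrow> 'a \<Rightarrow> 'b \<Rightarrow> 'l" where
  "opG m r A B \<alpha> a b = (INF x. INF a'. r (delta A x a' a) (SUP b'. m (\<alpha> a' b') (delta B x b' b)))"

definition opG' :: "('l::complete_lattice \<Rightarrow> 'l \<Rightarrow> 'l) \<Rightarrow> ('l \<Rightarrow> 'l \<Rightarrow> 'l) \<Rightarrow>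
    ('x, 'a, 'l) fuzzy_automaton \<Rightarrow> ('x, 'b, 'l) fuzzy_automaton \<Rightarrow> ('a \<Rightarrow> 'b \<Rightarrow> 'l) \<Rightarrow> 'a \<Rightarrow> 'b \<Rightarrow> 'l" where
  "opG' m r A B \<alpha> a b = (INF x. INF b'. r (delta B x b' b) (SUP a'. m (delta A x a' a) (\<alpha> a' b')))"

definition phi :: "('l::complete_lattice \<Rightarrow> 'l \<Rightarrow> 'l) \<Rightarrow> ('l \<Rightarrow> 'l \<Rightarrow> 'l) \<Rightarrow> simtype \<Rightarrow>
    ('x, 'a, 'l) fuzzy_automaton \<Rightarrow> ('x, 'b, 'l) fuzzy_automaton \<Rightarrow> ('a \<Rightarrow> 'b \<Rightarrow> 'l) \<Rightarrow> 'a \<Rightarrow> 'b \<Rightarrow> 'l" where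
  "phi m r w A B \<alpha> = (case w of
     FS \<Rightarrow> opF m r A B \<alpha>
   | BS \<Rightarrow> opG m r A B \<alpha>
   | FB \<Rightarrow> inf (opF m r A B \<alpha>) (opF' m r A B \<alpha>)
   | BB \<Rightarrow> inf (opG m r A B \<alpha>) (opG' m r A B \<alpha>)
   | FBB \<Rightarrow> inf (opF m r A B \<alpha>) (opG' m r A B \<alpha>)
   | BFB \<Rightarrow> inf (opG m r A B \<alpha>) (opF' m r A B \<alpha>))"

text \<open>phi_seq k is the paper's phi_(k+1): phi_1 = psi^w, phi_(k+1) = phi_k meet phi^w(phi_k).\<close>
fun phi_seq :: "('l::complete_lattice \<Rightarrow> 'l \<Rightarrow> 'l) \<Rightarrow> ('l \<Rightarrow> 'l \<Rightarrow> 'l) \<Rightarrow> simtype \<Rightarrow>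
    ('x, 'a, 'l) fuzzy_automaton \<Rightarrow> ('x, 'b, 'l) fuzzy_automaton \<Rightarrow> nat \<Rightarrow> 'a \<Rightarrow> 'b \<Rightarrow> 'l" where
  "phi_seq m r w A B 0 = psi r w A B"
| "phi_seq m r w A B (Suc k) = inf (phi_seq m r w A B k) (phi m r w A B (phi_seq m r w A B k))"

end

theory Submission
  imports Defs
begin


context
  fixes m r :: "'l::complete_lattice \<Rightarrow> 'l \<Rightarrow> 'l"
  assumes crl: "complete_residuated_lattice m r"
begin

lemma cm: "m x y = m y x"
  using crl unfolding complete_residuated_lattice_def
  by (metis abel_semigroup.commute comm_monoid.axioms(1))

lemma adj: "m x y \<le> z \<longleftrightarrow> x \<le> r y z"
  using crl unfolding complete_residuated_lattice_def by blast

lemma adj': "m y x \<le> z \<longleftrightarrow> x \<le> r y z"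
  using adj cm by metis

lemma mono_m: "y \<le> y' \<Longrightarrow> m x y \<le> m x y'"
  by (metis adj' order_refl order_trans)

lemma mono_r: "z \<le> z' \<Longrightarrow> r y z \<le> r y z'"
  by (metis adj order_refl order_trans)

lemma cond3_iff: "cond3 m w A B \<alpha> \<longleftrightarrow> \<alpha> \<le> psi r w A B"
  by (cases w) (auto simp: cond3_def psi_def le_fun_def compr_def scomp_def conv_def SUP_le_iff adj[symmetric] cm)

lemma cond2_iff: "cond2 m w A B \<alpha> \<longleftrightarrow> \<alpha> \<le> phi m r w A B \<alpha>"
  by (cases w) (auto simp: cond2_def phi_def opF_def opF'_def opG_def opG'_def le_fun_def rcomp_def conv_def SUP_le_iff le_INF_iff adj[symmetric] order.eq_iff cm)


lemma mono_phi: "\<alpha> \<le> \<beta> \<Longrightarrow> phi m r w A B \<alpha> \<le> phi m r w A B \<beta>"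
proof -
  assume h: "\<alpha> \<le> \<beta>"
  have s1: "\<And>(d::'z\<Rightarrow>'l) (f::'z\<Rightarrow>'l) g. f \<le> g \<Longrightarrow> (SUP b. m (d b) (f b)) \<le> (SUP b. m (d b) (g b))"
    by (rule SUP_mono) (auto intro: mono_m simp: le_fun_def)
  have s2: "\<And>(d::'z\<Rightarrow>'l) (f::'z\<Rightarrow>'l) g. f \<le> g \<Longrightarrow> (SUP b. m (f b) (d b)) \<le> (SUP b. m (g b) (d b))"
    by (rule SUP_mono') (metis cm mono_m le_fun_def)
  have F: "opF m r A B \<alpha> \<le> opF m r A B \<beta>"
    unfolding opF_def le_fun_def
    by (intro allI INF_mono' mono_r s1) (simp add: h[unfolded le_fun_def] le_fun_def)
  have F': "opF' m r A B \<alpha> \<le> opF' m r A B \<beta>"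
    unfolding opF'_def le_fun_def
    by (intro allI INF_mono' mono_r s1) (simp add: h[unfolded le_fun_def] le_fun_def)
  have G: "opG m r A B \<alpha> \<le> opG m r A B \<beta>"
    unfolding opG_def le_fun_def
    by (intro allI INF_mono' mono_r s2) (simp add: h[unfolded le_fun_def] le_fun_def)
  have G': "opG' m r A B \<alpha> \<le> opG' m r A B \<beta>"
    unfolding opG'_def le_fun_def
    by (intro allI INF_mono' mono_r s1) (simp add: h[unfolded le_fun_def] le_fun_def)
  show ?thesis using F F' G G' by (cases w) (auto simp: phi_def intro: le_infI1 le_infI2)
qed

context
  assumes dist: "inf_distributive m"
begin

lemma rne: "range y \<noteq> {}" by simp

lemma sup_INF: "sup (x::'l) (INF k. y k) = (INF k::nat. sup x (y k))"
proof -
  have "sup x (Inf (range y)) = (INF z\<in>range y. sup x z)"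
    by (rule conjunct1[OF dist[unfolded inf_distributive_def, rule_format, OF rne]])
  then show ?thesis by (simp add: image_comp comp_def)
qed

lemma m_INF: "m x (INF k. y k) = (INF k::nat. m x (y k))"
proof -
  have "m x (Inf (range y)) = (INF z\<in>range y. m x z)"
    by (rule conjunct2[OF dist[unfolded inf_distributive_def, rule_format, OF rne]])
  then show ?thesis by (simp add: image_comp comp_def)
qed

lemma sup_chain:
  assumes dx: "\<And>k j. k \<le> j \<Longrightarrow> x j \<le> (x k::'l)"
    and dy: "\<And>k j. k \<le> j \<Longrightarrow> y j \<le> (y k::'l)"
  shows "(INF n::nat. sup (x n) (y n)) \<le> sup (INF k. x k) (INF k. y k)"
proof -
  have "sup (INF k. x k) (INF k. y k) = (INF j. sup (INF k. x k) (y j))" by (rule sup_INF)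
  also have "\<dots> = (INF j. INF k. sup (y j) (x k))"
  proof (rule arg_cong[where f=Inf], rule image_cong[OF refl])
    fix j show "sup (INF k. x k) (y j) = (INF k. sup (y j) (x k))"
      using sup_INF[of "y j" x] by (metis sup_commute)
  qed
  finally have e: "sup (INF k. x k) (INF k. y k) = (INF j. INF k. sup (y j) (x k))" .
  have hh: "(INF n::nat. sup (x n) (y n)) \<le> sup (y j) (x k)" for j k
  proof -
    have "(INF n::nat. sup (x n) (y n)) \<le> sup (x (max j k)) (y (max j k))" by (rule INF_lower) simp
    also have "\<dots> \<le> sup (x k) (y j)" by (rule sup_mono[OF dx dy]) simp_all
    also have "\<dots> = sup (y j) (x k)" by (rule sup_commute)
    finally show ?thesis .
  qed
  show ?thesis unfolding e by (intro INF_greatest hh)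
qed

lemma fin_chain:
  assumes "finite S"
    and dh: "\<And>k j b. k \<le> j \<Longrightarrow> h j b \<le> (h k b::'l)"
  shows "(INF k::nat. SUP b\<in>S. h k b) \<le> (SUP b\<in>S. INF k. h k b)"
  using assms(1)
proof (induction S rule: finite_induct)
  case empty
  then show ?case by (simp add: INF_const)
next
  case (insert c S)
  have "(INF k::nat. SUP b\<in>insert c S. h k b) = (INF k. sup (h k c) (SUP b\<in>S. h k b))" by simp
  also have "\<dots> \<le> sup (INF k. h k c) (INF k. SUP b\<in>S. h k b)"
    by (rule sup_chain) (simp_all add: dh SUP_mono')
  also have "\<dots> \<le> sup (INF k. h k c) (SUP b\<in>S. INF k. h k b)"
    using insert.IH by (rule sup_mono[OF order_refl])
  finally show ?case by simp
qed

lemma key: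
  assumes df: "\<And>k j. k \<le> j \<Longrightarrow> f j \<le> (f k:: 'b::finite \<Rightarrow> 'l)"
  shows "(INF k::nat. SUP b. m (d b) (f k b)) \<le> (SUP b. m (d b) (INF k. f k b))"
proof -
  have "(INF k::nat. SUP b. m (d b) (f k b)) \<le> (SUP b. INF k. m (d b) (f k b))"
    using fin_chain[OF finite_UNIV, of "\<lambda>k b. m (d b) (f k b)"] mono_m df by (simp add: le_fun_def)
  also have "\<dots> = (SUP b. m (d b) (INF k. f k b))" by (simp add: m_INF)
  finally show ?thesis .
qed


lemma key2:
  assumes df: "\<And>k j. k \<le> j \<Longrightarrow> f j \<le> (f k:: 'b::finite \<Rightarrow> 'l)"
  shows "(INF k::nat. SUP b. m (f k b) (d b)) \<le> (SUP b. m (INF k. f k b) (d b))"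
  using key[OF df, where d=d] by (simp only: cm)

lemma opF_cont:
  fixes f :: "nat \<Rightarrow> 'a::finite \<Rightarrow> 'b::finite \<Rightarrow> 'l"
  assumes df: "\<And>k j. k \<le> j \<Longrightarrow> f j \<le> f k"
    and h: "\<And>k. (INF k. f k) \<le> opF m r A B (f k)"
  shows "(INF k. f k) \<le> opF m r A B (INF k. f k)"
proof (rule le_funI)+
  fix a b
  show "(INF k. f k) a b \<le> opF m r A B (INF k. f k) a b"
    unfolding opF_def INF_apply
  proof (intro INF_greatest, unfold adj[symmetric])
    fix x a'
    have "m (INF k. f k a b) (delta A x a a') \<le> (INF k. SUP b'. m (delta B x b b') (f k a' b'))"
    proof (rule INF_greatest)
      fix k
      have "(INF k. f k) a b \<le> opF m r A B (f k) a b" using h le_fun_def by metis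
      then have "(INF k. f k a b) \<le> r (delta A x a a') (SUP b'. m (delta B x b b') (f k a' b'))"
        unfolding opF_def INF_apply le_INF_iff by blast
      then show "m (INF k. f k a b) (delta A x a a') \<le> (SUP b'. m (delta B x b b') (f k a' b'))"
        by (simp add: adj)
    qed
    also have "\<dots> \<le> (SUP b'. m (delta B x b b') (INF k. f k a' b'))"
      by (rule key) (use df in \<open>auto simp: le_fun_def\<close>)
    finally show "m (INF k. f k a b) (delta A x a a') \<le> (SUP b'. m (delta B x b b') (INF k. f k a' b'))" .
  qed
qed

lemma opF'_cont:
  fixes f :: "nat \<Rightarrow> 'a::finite \<Rightarrow> 'b::finite \<Rightarrow> 'l"
  assumes df: "\<And>k j. k \<le> j \<Longrightarrow> f j \<le> f k"
    and h: "\<And>k. (INF k. f k) \<le> opF' m r A B (f k)"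
  shows "(INF k. f k) \<le> opF' m r A B (INF k. f k)"
proof (rule le_funI)+
  fix a b
  show "(INF k. f k) a b \<le> opF' m r A B (INF k. f k) a b"
    unfolding opF'_def INF_apply
  proof (intro INF_greatest, unfold adj[symmetric])
    fix x b'
    have "m (INF k. f k a b) (delta B x b b') \<le> (INF k. SUP a'. m (delta A x a a') (f k a' b'))"
    proof (rule INF_greatest)
      fix k
      have "(INF k. f k) a b \<le> opF' m r A B (f k) a b" using h le_fun_def by metis
      then have "(INF k. f k a b) \<le> r (delta B x b b') (SUP a'. m (delta A x a a') (f k a' b'))"
        unfolding opF'_def INF_apply le_INF_iff by blast
      then show "m (INF k. f k a b) (delta B x b b') \<le> (SUP a'. m (delta A x a a') (f k a' b'))"
        by (simp add: adj)
    qed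
    also have "\<dots> \<le> (SUP a'. m (delta A x a a') (INF k. f k a' b'))"
      by (rule key) (use df in \<open>auto simp: le_fun_def\<close>)
    finally show "m (INF k. f k a b) (delta B x b b') \<le> (SUP a'. m (delta A x a a') (INF k. f k a' b'))" .
  qed
qed

lemma opG_cont:
  fixes f :: "nat \<Rightarrow> 'a::finite \<Rightarrow> 'b::finite \<Rightarrow> 'l"
  assumes df: "\<And>k j. k \<le> j \<Longrightarrow> f j \<le> f k"
    and h: "\<And>k. (INF k. f k) \<le> opG m r A B (f k)"
  shows "(INF k. f k) \<le> opG m r A B (INF k. f k)"
proof (rule le_funI)+
  fix a b
  show "(INF k. f k) a b \<le> opG m r A B (INF k. f k) a b"
    unfolding opG_def INF_apply
  proof (intro INF_greatest, unfold adj[symmetric])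
    fix x a'
    have "m (INF k. f k a b) (delta A x a' a) \<le> (INF k. SUP b'. m (f k a' b') (delta B x b' b))"
    proof (rule INF_greatest)
      fix k
      have "(INF k. f k) a b \<le> opG m r A B (f k) a b" using h le_fun_def by metis
      then have "(INF k. f k a b) \<le> r (delta A x a' a) (SUP b'. m (f k a' b') (delta B x b' b))"
        unfolding opG_def INF_apply le_INF_iff by blast
      then show "m (INF k. f k a b) (delta A x a' a) \<le> (SUP b'. m (f k a' b') (delta B x b' b))"
        by (simp add: adj)
    qed
    also have "\<dots> \<le> (SUP b'. m (INF k. f k a' b') (delta B x b' b))"
      by (rule key2) (use df in \<open>auto simp: le_fun_def\<close>)
    finally show "m (INF k. f k a b) (delta A x a' a) \<le> (SUP b'. m (INF k. f k a' b') (delta B x b' b))" .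
  qed
qed

lemma opG'_cont:
  fixes f :: "nat \<Rightarrow> 'a::finite \<Rightarrow> 'b::finite \<Rightarrow> 'l"
  assumes df: "\<And>k j. k \<le> j \<Longrightarrow> f j \<le> f k"
    and h: "\<And>k. (INF k. f k) \<le> opG' m r A B (f k)"
  shows "(INF k. f k) \<le> opG' m r A B (INF k. f k)"
proof (rule le_funI)+
  fix a b
  show "(INF k. f k) a b \<le> opG' m r A B (INF k. f k) a b"
    unfolding opG'_def INF_apply
  proof (intro INF_greatest, unfold adj[symmetric])
    fix x b'
    have "m (INF k. f k a b) (delta B x b' b) \<le> (INF k. SUP a'. m (delta A x a' a) (f k a' b'))"
    proof (rule INF_greatest)
      fix k
      have "(INF k. f k) a b \<le> opG' m r A B (f k) a b" using h le_fun_def by metis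
      then have "(INF k. f k a b) \<le> r (delta B x b' b) (SUP a'. m (delta A x a' a) (f k a' b'))"
        unfolding opG'_def INF_apply le_INF_iff by blast
      then show "m (INF k. f k a b) (delta B x b' b) \<le> (SUP a'. m (delta A x a' a) (f k a' b'))"
        by (simp add: adj)
    qed
    also have "\<dots> \<le> (SUP a'. m (delta A x a' a) (INF k. f k a' b'))"
      by (rule key) (use df in \<open>auto simp: le_fun_def\<close>)
    finally show "m (INF k. f k a b) (delta B x b' b) \<le> (SUP a'. m (delta A x a' a) (INF k. f k a' b'))" .
  qed
qed


lemma seq_dec: "k \<le> j \<Longrightarrow> phi_seq m r w A B j \<le> phi_seq m r w A B k"
  by (rule lift_Suc_antimono_le[of "phi_seq m r w A B"]) auto

lemma main:
  fixes w :: simtype and A :: "('x, 'a::finite, 'l) fuzzy_automaton" and B :: "('x, 'b::finite, 'l) fuzzy_automaton"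
  defines "\<Phi> \<equiv> (INF k. phi_seq m r w A B k)"
  shows "\<Phi> \<le> psi r w A B" and "\<Phi> \<le> phi m r w A B \<Phi>"
    and "\<And>\<alpha>. \<alpha> \<le> psi r w A B \<Longrightarrow> \<alpha> \<le> phi m r w A B \<alpha> \<Longrightarrow> \<alpha> \<le> \<Phi>"
proof -
  let ?S = "phi_seq m r w A B"
  have dec: "\<And>k j. k \<le> j \<Longrightarrow> ?S j \<le> ?S k" by (rule seq_dec)
  have hk: "\<Phi> \<le> phi m r w A B (?S k)" for k
  proof -
    have "\<Phi> \<le> ?S (Suc k)" unfolding \<Phi>_def by (rule INF_lower) simp
    then show ?thesis by simp
  qed
  show "\<Phi> \<le> psi r w A B"
  proof -
    have "\<Phi> \<le> ?S 0" unfolding \<Phi>_def by (rule INF_lower) simp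
    then show ?thesis by simp
  qed
  show "\<Phi> \<le> phi m r w A B \<Phi>"
    unfolding \<Phi>_def
  proof (cases w)
    case FS then show "(INF k. ?S k) \<le> phi m r w A B (INF k. ?S k)"
      using hk unfolding \<Phi>_def phi_def by (auto intro!: opF_cont seq_dec)
  next
    case BS then show "(INF k. ?S k) \<le> phi m r w A B (INF k. ?S k)"
      using hk unfolding \<Phi>_def phi_def by (auto intro!: opG_cont seq_dec)
  next
    case FB then show "(INF k. ?S k) \<le> phi m r w A B (INF k. ?S k)"
      using hk unfolding \<Phi>_def phi_def by (auto intro!: opF_cont opF'_cont seq_dec simp: le_inf_iff)
  next
    case BB then show "(INF k. ?S k) \<le> phi m r w A B (INF k. ?S k)"
      using hk unfolding \<Phi>_def phi_def by (auto intro!: opG_cont opG'_cont seq_dec simp: le_inf_iff)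
  next
    case FBB then show "(INF k. ?S k) \<le> phi m r w A B (INF k. ?S k)"
      using hk unfolding \<Phi>_def phi_def by (auto intro!: opF_cont opG'_cont seq_dec simp: le_inf_iff)
  next
    case BFB then show "(INF k. ?S k) \<le> phi m r w A B (INF k. ?S k)"
      using hk unfolding \<Phi>_def phi_def by (auto intro!: opG_cont opF'_cont seq_dec simp: le_inf_iff)
  qed
  fix \<alpha> assume a1: "\<alpha> \<le> psi r w A B" and a2: "\<alpha> \<le> phi m r w A B \<alpha>"
  have "\<alpha> \<le> ?S k" for k
  proof (induction k)
    case 0 then show ?case using a1 by simp
  next
    case (Suc k)
    have "\<alpha> \<le> phi m r w A B (?S k)" using a2 mono_phi[OF Suc] by (rule order_trans)
    with Suc show ?case by (simp del: inf_apply add: le_inf_iff)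
  qed
  then show "\<alpha> \<le> \<Phi>" unfolding \<Phi>_def by (rule INF_greatest)
qed

end

lemma scomp_mono: "\<phi> \<le> \<psi> \<Longrightarrow> scomp m f \<phi> \<le> scomp m f \<psi>"
  unfolding scomp_def le_fun_def by (auto intro!: SUP_mono' mono_m)

lemma compr_mono: "\<phi> \<le> \<psi> \<Longrightarrow> compr m \<phi> g \<le> compr m \<psi> g"
proof -
  assume h: "\<phi> \<le> \<psi>"
  have "m (\<phi> a b) (g b) \<le> m (\<psi> a b) (g b)" for a b
    using mono_m[of "\<phi> a b" "\<psi> a b" "g b"] h by (simp add: cm le_fun_def)
  then show ?thesis unfolding compr_def le_fun_def by (auto intro!: SUP_mono')
qed

lemma conv_mono: "\<phi> \<le> \<psi> \<Longrightarrow> conv \<phi> \<le> conv \<psi>"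
  unfolding conv_def le_fun_def by auto

lemma cond1_mono: "\<phi> \<le> \<psi> \<Longrightarrow> cond1 m w A B \<phi> \<Longrightarrow> cond1 m w A B \<psi>"
  unfolding cond1_def
  by (cases w) (auto intro: order_trans[OF _ scomp_mono] order_trans[OF _ compr_mono] conv_mono)

end

theorem theorem5p4:
  fixes m r :: "'l::complete_lattice \<Rightarrow> 'l \<Rightarrow> 'l"
    and w :: simtype
    and A :: "('x::finite, 'a::finite, 'l) fuzzy_automaton"
    and B :: "('x, 'b::finite, 'l) fuzzy_automaton"
  assumes "complete_residuated_lattice m r"
    and "inf_distributive m"
  defines "\<Phi> \<equiv> (INF k. phi_seq m r w A B k)"
  shows "(cond2 m w A B \<Phi> \<and> cond3 m w A B \<Phi> \<and>
          (\<forall>\<alpha>. cond2 m w A B \<alpha> \<and> cond3 m w A B \<alpha> \<longrightarrow> \<alpha> \<le> \<Phi>))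
       \<and> (cond1 m w A B \<Phi> \<longrightarrow>
          cond1 m w A B \<Phi> \<and> cond2 m w A B \<Phi> \<and> cond3 m w A B \<Phi> \<and>
          (\<forall>\<alpha>. cond1 m w A B \<alpha> \<and> cond2 m w A B \<alpha> \<and> cond3 m w A B \<alpha> \<longrightarrow> \<alpha> \<le> \<Phi>))
       \<and> (\<not> cond1 m w A B \<Phi> \<longrightarrow>
          \<not> (\<exists>\<alpha>. cond1 m w A B \<alpha> \<and> cond2 m w A B \<alpha> \<and> cond3 m w A B \<alpha>))"
  proof -
  note crl = assms(1) and dist = assms(2)
  have P1: "\<Phi> \<le> psi r w A B" unfolding \<Phi>_def by (rule main(1)[OF crl dist])
  have P2: "\<Phi> \<le> phi m r w A B \<Phi>" unfolding \<Phi>_def by (rule main(2)[OF crl dist])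
  have c3: "cond3 m w A B \<Phi>" using P1 cond3_iff[OF crl] by blast
  have c2: "cond2 m w A B \<Phi>" using P2 cond2_iff[OF crl] by blast
  have gr: "\<alpha> \<le> \<Phi>" if "cond2 m w A B \<alpha>" "cond3 m w A B \<alpha>" for \<alpha>
    unfolding \<Phi>_def
    by (rule main(3)[OF crl dist]) (use that cond2_iff[OF crl] cond3_iff[OF crl] in blast)+
  have nc: "\<not> (\<exists>\<alpha>. cond1 m w A B \<alpha> \<and> cond2 m w A B \<alpha> \<and> cond3 m w A B \<alpha>)"
    if "\<not> cond1 m w A B \<Phi>"
    using that gr cond1_mono[OF crl] by blast
  show ?thesis using c2 c3 gr nc by blast
qed

end
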